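(* Let $n\ge2$, $\omega\in(0,1)$, and let $B_1,\dots,B_n$ be independent lognormal service times with $m_i=\mathbb E\ln B_i$, $s_i^2=\mathrm{Var}\ln B_i$, $m_1\le\cdots\le m_n$, $s_1^2\le\cdots\le s_n^2$. Then for every sequence $\tau\in\mathsf S_n$ and every schedule $\boldsymbol x$, $$C(\tau,\boldsymbol x,\omega)\ge\bigl[(1-\omega)\,\mathbb P(Z\ge Q_Z(1-\omega)-s_1)-\omega\,\mathbb P(Z\le Q_Z(1-\omega)-s_1)\bigr]\sum_{i=1}^{n-1}\exp(m_i+s_i^2/2),$$ where $Z$ is standard normal and $Q_Z(y)=\inf\{x:y\le\mathbb P(Z\le x)\}$.
   Context: Appointment model: a sequence is a permutation $\tau\in\mathsf S_n$, $\tau(i)$ the patient in slot $i$; a schedule is $\boldsymbol x=(x_1,\dots,x_n)\in\mathbb R_+^n$, $x_j$ the interarrival time between patient $j$ and the next patient. Waiting and idle times: $W_1=I_1=0$, $W_{i+1}=(W_i+B_{\tau(i)}-x_{\tau(i)})^+$, $I_{i+1}=(W_i+B_{\tau(i)}-x_{\tau(i)})^-$, $a^+=\max\{0,a\}$, $a^-=\max\{0,-a\}$. Cost $C(\tau,\boldsymbol x,\omega)=\omega\sum_{i=1}^n\mathbb EI_i+(1-\omega)\sum_{i=1}^n\mathbb EW_i$. *)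

theory Defs
  imports "HOL-Probability.Probability"
begin

text \<open>Waiting time of the patient in slot k (slots numbered 1..n), given the
sequence tau (tau k = patient in slot k), the schedule x (x j = interarrival time
after patient j) and realized service times b (b j = service time of patient j).\<close>
fun wait :: "(nat \<Rightarrow> nat) \<Rightarrow> (nat \<Rightarrow> real) \<Rightarrow> (nat \<Rightarrow> real) \<Rightarrow> nat \<Rightarrow> real" where
  "wait tau x b 0 = 0"
| "wait tau x b (Suc 0) = 0"
| "wait tau x b (Suc (Suc i)) = max 0 (wait tau x b (Suc i) + b (tau (Suc i)) - x (tau (Suc i)))"

fun idle :: "(nat \<Rightarrow> nat) \<Rightarrow> (nat \<Rightarrow> real) \<Rightarrow> (nat \<Rightarrow> real) \<Rightarrow> nat \<Rightarrow> real" where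
  "idle tau x b 0 = 0"
| "idle tau x b (Suc 0) = 0"
| "idle tau x b (Suc (Suc i)) = max 0 (- (wait tau x b (Suc i) + b (tau (Suc i)) - x (tau (Suc i))))"

definition cost :: "'a measure \<Rightarrow> (nat \<Rightarrow> 'a \<Rightarrow> real) \<Rightarrow> nat \<Rightarrow> (nat \<Rightarrow> nat) \<Rightarrow> (nat \<Rightarrow> real) \<Rightarrow> real \<Rightarrow> real" where
  "cost M B n tau x w =
     w * (\<Sum>i=1..n. integral\<^sup>L M (\<lambda>\<xi>. idle tau x (\<lambda>j. B j \<xi>) i))
     + (1 - w) * (\<Sum>i=1..n. integral\<^sup>L M (\<lambda>\<xi>. wait tau x (\<lambda>j. B j \<xi>) i))"

definition std_normal :: "real measure" where
  "std_normal = density lborel std_normal_density"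

definition Phi :: "real \<Rightarrow> real" where
  "Phi t = measure std_normal {..t}"

definition Q_Z :: "real \<Rightarrow> real" where
  "Q_Z y = Inf {t. y \<le> Phi t}"

definition lognormal_rv :: "'a measure \<Rightarrow> ('a \<Rightarrow> real) \<Rightarrow> real \<Rightarrow> real \<Rightarrow> bool" where
  "lognormal_rv M X mu sd \<longleftrightarrow>
     X \<in> borel_measurable M \<and> 0 < sd \<and> (AE \<xi> in M. 0 < X \<xi>) \<and>
     distributed M lborel (\<lambda>\<xi>. ln (X \<xi>)) (normal_density mu sd)"

end

theory Submission
  imports Defs
begin


lemma std_normal_real_distribution: "real_distribution std_normal"
  unfolding real_distribution_def real_distribution_axioms_def std_normal_def
  by (auto intro: prob_space_normal_density)

lemma Phi_cdf: "Phi = cdf std_normal"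
  by (simp add: Phi_def cdf_def fun_eq_iff)

lemma phi_int:
  assumes [measurable]: "A \<in> sets borel"
  shows "(\<integral>v. std_normal_density v * indicator A v \<partial>lborel) = measure std_normal A"
proof -
  have "measure std_normal A = integral\<^sup>L std_normal (indicator A)"
    by (simp add: std_normal_def)
  also have "\<dots> = (\<integral>v. std_normal_density v * indicator A v \<partial>lborel)"
    unfolding std_normal_def by (subst integral_real_density) auto
  finally show ?thesis by simp
qed

lemma std_normal_singleton: "measure std_normal {c} = 0"
proof -
  have "AE v in lborel. std_normal_density v * indicator {c} v = 0"
      using AE_lborel_singleton[of c] by eventually_elim auto
  hence "(\<integral>v. std_normal_density v * indicator {c} v \<partial>lborel) = 0"
    by (rule integral_eq_zero_AE)
  then show ?thesis using phi_int[of "{c}"] by simp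
qed

lemma isCont_Phi: "isCont Phi c"
  unfolding Phi_cdf
  using finite_borel_measure.isCont_cdf[OF real_distribution.finite_borel_measure_M[OF std_normal_real_distribution]]
    std_normal_singleton by simp

lemma Phi_mono: "a \<le> b \<Longrightarrow> Phi a \<le> Phi b"
  unfolding Phi_cdf
  using finite_borel_measure.cdf_nondecreasing[OF real_distribution.finite_borel_measure_M[OF std_normal_real_distribution]]
  by simp

lemma std_normal_lessThan: "measure std_normal {..<c} = Phi c"
proof -
  interpret real_distribution std_normal by (rule std_normal_real_distribution)
  have "measure std_normal {..c} = measure std_normal ({..<c} \<union> {c})"
    by (simp add: ivl_disj_un(2)[symmetric])
  also have "\<dots> = measure std_normal {..<c} + measure std_normal {c}"
    by (subst finite_measure_Union) auto
  finally show ?thesis using std_normal_singleton by (simp add: Phi_def)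
qed

lemma std_normal_atLeast: "measure std_normal {c..} = 1 - Phi c"
proof -
  interpret real_distribution std_normal by (rule std_normal_real_distribution)
  have "measure std_normal {c..} = 1 - measure std_normal (UNIV - {c..})"
    using prob_compl[of "{c..}"] by simp
  also have "UNIV - {c..} = {..<c}" by auto
  finally show ?thesis using std_normal_lessThan by simp
qed

lemma phi_if_int:
  "(\<integral>v. std_normal_density v * (if c \<le> v then a else b) \<partial>lborel) = a * (1 - Phi c) + b * Phi c"
proof -
  have eq: "(\<lambda>v. std_normal_density v * (if c \<le> v then a else b)) =
     (\<lambda>v. a * (std_normal_density v * indicator {c..} v) + b * (std_normal_density v * indicator {..<c} v))"
    by (auto simp: fun_eq_iff indicator_def)
  have i1: "integrable lborel (\<lambda>v. std_normal_density v * indicator A v)" if [measurable]: "A \<in> sets borel" for A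
    by (rule integrable_real_mult_indicator) auto
  show ?thesis unfolding eq
    apply (subst Bochner_Integration.integral_add)
      apply (rule integrable_mult_right, rule i1, simp)
     apply (rule integrable_mult_right, rule i1, simp)
    apply (simp add: phi_int std_normal_atLeast std_normal_lessThan)
    done
qed

lemma Phi_limits: "(Phi \<longlongrightarrow> 0) at_bot" "(Phi \<longlongrightarrow> 1) at_top"
  unfolding Phi_cdf
  using finite_borel_measure.cdf_lim_at_bot[OF real_distribution.finite_borel_measure_M[OF std_normal_real_distribution]]
    real_distribution.cdf_lim_at_top_prob[OF std_normal_real_distribution] by auto

lemma Phi_Q_Z:
  assumes "0 < y" "y < 1"
  shows "Phi (Q_Z y) = y"
proof -
  let ?S = "{t. y \<le> Phi t}"
  have "\<forall>\<^sub>F t in at_top. Phi t > y" using Phi_limits(2) assms(2) by (rule order_tendstoD)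
  then obtain t1 where "y < Phi t1" by (auto simp: eventually_at_top_linorder)
  hence ne: "?S \<noteq> {}" by (metis (mono_tags) less_imp_le empty_iff mem_Collect_eq)
  have "\<forall>\<^sub>F t in at_bot. Phi t < y" using Phi_limits(1) assms(1) by (rule order_tendstoD)
  then obtain t0 where t0: "\<And>t. t \<le> t0 \<Longrightarrow> Phi t < y" by (auto simp: eventually_at_bot_linorder)
  have bdd: "bdd_below ?S"
    by (rule bdd_belowI[of _ t0]) (metis linorder_not_le mem_Collect_eq not_less_iff_gr_or_eq t0 less_le_not_le)
  have cont: "continuous_on UNIV Phi" using isCont_Phi by (simp add: continuous_at_imp_continuous_on)
  have cl: "closed ?S"
    using closed_Collect_le[OF continuous_on_const cont, of y] by simp
  have inS: "Q_Z y \<in> ?S" unfolding Q_Z_def by (rule closed_contains_Inf[OF ne bdd cl])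
  show ?thesis
  proof (rule ccontr)
    assume "Phi (Q_Z y) \<noteq> y"
    with inS have gt: "Phi (Q_Z y) > y" by auto
    have "(Phi \<longlongrightarrow> Phi (Q_Z y)) (at (Q_Z y))" using isCont_Phi isCont_def by blast
    hence "\<forall>\<^sub>F t in at_left (Q_Z y). Phi t > y"
      using gt filterlim_at_split order_tendstoD(1) by blast
    then obtain d where "d < Q_Z y" "\<forall>t. d < t \<and> t < Q_Z y \<longrightarrow> Phi t > y"
      using eventually_at_left_real[of "Q_Z y - 1" "Q_Z y"] eventually_at_left by (metis lt_ex)
    then obtain t where "t < Q_Z y" "Phi t > y"
      by (metis dense)
    moreover have "Q_Z y \<le> t" unfolding Q_Z_def using \<open>Phi t > y\<close> bdd by (auto intro!: cInf_lower)
    ultimately show False by simp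
  qed
qed


lemma nd_affine_pt:
  assumes "0 < \<sigma>"
  shows "normal_density \<mu> \<sigma> (\<mu> + \<sigma> * u) = std_normal_density u / \<sigma>"
proof -
  have "sqrt (2 * pi * \<sigma>\<^sup>2) = \<sigma> * sqrt (2 * pi)"
    using assms by (simp add: real_sqrt_mult)
  moreover have h2: "-((\<mu> + \<sigma> * u) - \<mu>)\<^sup>2 / (2 * \<sigma>\<^sup>2) = - u\<^sup>2 / 2"
    using assms by (simp add: power_mult_distrib)
  ultimately have "normal_density \<mu> \<sigma> (\<mu> + \<sigma> * u) = 1 / (\<sigma> * sqrt (2 * pi)) * exp (- u\<^sup>2 / 2)"
    by (simp only: normal_density_def)
  thus ?thesis
    by (simp add: std_normal_density_def)
qed

lemma nd_affine_int:
  assumes "0 < \<sigma>"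
  shows "(\<integral>t. normal_density \<mu> \<sigma> t * F t \<partial>lborel) = (\<integral>u. std_normal_density u * F (\<mu> + \<sigma> * u) \<partial>lborel)"
proof -
  have "(\<integral>t. normal_density \<mu> \<sigma> t * F t \<partial>lborel)
     = \<bar>\<sigma>\<bar> *\<^sub>R (\<integral>u. normal_density \<mu> \<sigma> (\<mu> + \<sigma> * u) * F (\<mu> + \<sigma> * u) \<partial>lborel)"
    using assms by (subst lborel_integral_real_affine[where c=\<sigma> and t=\<mu>]) auto
  also have "\<dots> = \<sigma> * (\<integral>u. (1/\<sigma>) * (std_normal_density u * F (\<mu> + \<sigma> * u)) \<partial>lborel)"
    using assms by (simp add: nd_affine_pt)
  also have "\<dots> = (\<integral>u. std_normal_density u * F (\<mu> + \<sigma> * u) \<partial>lborel)"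
    using assms by simp
  finally show ?thesis .
qed

lemma nd_exp:
  assumes "0 < \<sigma>"
  shows "normal_density \<mu> \<sigma> t * exp t = exp (\<mu> + \<sigma>\<^sup>2 / 2) * normal_density (\<mu> + \<sigma>\<^sup>2) \<sigma> t"
proof -
  have "-(t - \<mu>)\<^sup>2/ (2 * \<sigma>\<^sup>2) + t = (\<mu> + \<sigma>\<^sup>2 / 2) + (-(t - (\<mu> + \<sigma>\<^sup>2))\<^sup>2/ (2 * \<sigma>\<^sup>2))"
    using assms by (simp add: field_simps power2_eq_square)
  hence "exp (-(t - \<mu>)\<^sup>2/ (2 * \<sigma>\<^sup>2)) * exp t = exp (\<mu> + \<sigma>\<^sup>2 / 2) * exp (-(t - (\<mu> + \<sigma>\<^sup>2))\<^sup>2/ (2 * \<sigma>\<^sup>2))"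
    by (metis exp_add)
  thus ?thesis by (simp add: normal_density_def)
qed

lemma integrable_nd_if:
  assumes "0 < \<sigma>" shows "integrable lborel (\<lambda>t. normal_density \<mu> \<sigma> t * (if a \<le> t then \<alpha> else \<beta>))"
proof (rule Bochner_Integration.integrable_bound)
  show "integrable lborel (\<lambda>t. (\<bar>\<alpha>\<bar> + \<bar>\<beta>\<bar>) * normal_density \<mu> \<sigma> t)"
    by (rule integrable_mult_right) (rule integrable_normal_density[OF assms])
  show "AE t in lborel. norm (normal_density \<mu> \<sigma> t * (if a \<le> t then \<alpha> else \<beta>))
         \<le> norm ((\<bar>\<alpha>\<bar> + \<bar>\<beta>\<bar>) * normal_density \<mu> \<sigma> t)"
    by (intro AE_I2) (auto simp: abs_mult mult.commute[of "normal_density _ _ _"] intro!: mult_right_mono)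
qed auto

lemma logn_transfer:
  assumes "lognormal_rv M X \<mu> \<sigma>" and [measurable]: "F \<in> borel_measurable borel"
    and "integrable lborel (\<lambda>t. normal_density \<mu> \<sigma> t * F t)"
  shows "integrable M (\<lambda>\<xi>. F (ln (X \<xi>)))"
    and "(\<integral>\<xi>. F (ln (X \<xi>)) \<partial>M) = (\<integral>t. normal_density \<mu> \<sigma> t * F t \<partial>lborel)"
proof -
  have D: "distributed M lborel (\<lambda>\<xi>. ln (X \<xi>)) (normal_density \<mu> \<sigma>)"
    using assms(1) unfolding lognormal_rv_def by auto
  show "integrable M (\<lambda>\<xi>. F (ln (X \<xi>)))"
    using distributed_integrable[OF D, of F] assms(3) by auto
  show "(\<integral>\<xi>. F (ln (X \<xi>)) \<partial>M) = (\<integral>t. normal_density \<mu> \<sigma> t * F t \<partial>lborel)"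
    using distributed_integral[OF D, of F] by auto
qed


lemma logn_key:
  fixes c \<alpha> \<beta> :: real
  assumes LN: "lognormal_rv M X \<mu> \<sigma>"
  defines "L \<equiv> \<lambda>b. if exp (\<mu> + \<sigma> * c) \<le> b then \<alpha> else \<beta>"
  shows "integrable M X" "integrable M (\<lambda>\<xi>. L (X \<xi>))" "integrable M (\<lambda>\<xi>. L (X \<xi>) * X \<xi>)"
    "(\<integral>\<xi>. L (X \<xi>) \<partial>M) = \<alpha> * (1 - Phi c) + \<beta> * Phi c"
    "(\<integral>\<xi>. L (X \<xi>) * X \<xi> \<partial>M) = exp (\<mu> + \<sigma>\<^sup>2 / 2) * (\<alpha> * (1 - Phi (c - \<sigma>)) + \<beta> * Phi (c - \<sigma>))"
proof -
  have sp: "0 < \<sigma>" and Xm[measurable]: "X \<in> borel_measurable M" and pos: "AE \<xi> in M. 0 < X \<xi>"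
    using LN unfolding lognormal_rv_def by auto
  define F1 where "F1 = (\<lambda>t. if \<mu> + \<sigma> * c \<le> t then \<alpha> else \<beta>)"
  define F2 where "F2 = (\<lambda>t. F1 t * exp t)"
  have F1m[measurable]: "F1 \<in> borel_measurable borel" unfolding F1_def by measurable
  have F2m[measurable]: "F2 \<in> borel_measurable borel" unfolding F2_def by measurable
  have Lm[measurable]: "L \<in> borel_measurable borel" unfolding L_def by measurable
  have ae1: "AE \<xi> in M. L (X \<xi>) = F1 (ln (X \<xi>))"
    using pos by eventually_elim (simp add: L_def F1_def ln_ge_iff)
  have ae2: "AE \<xi> in M. L (X \<xi>) * X \<xi> = F2 (ln (X \<xi>))"
    using pos by eventually_elim (simp add: L_def F1_def F2_def ln_ge_iff)
  have ae3: "AE \<xi> in M. X \<xi> = exp (ln (X \<xi>))"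
    using pos by eventually_elim simp
  have ndexp: "(\<lambda>t. normal_density \<mu> \<sigma> t * exp t) = (\<lambda>t. exp (\<mu> + \<sigma>\<^sup>2 / 2) * normal_density (\<mu> + \<sigma>\<^sup>2) \<sigma> t)"
    using nd_exp[OF sp] by auto
  have ndF2: "(\<lambda>t. normal_density \<mu> \<sigma> t * F2 t) = (\<lambda>t. exp (\<mu> + \<sigma>\<^sup>2 / 2) * (normal_density (\<mu> + \<sigma>\<^sup>2) \<sigma> t * F1 t))"
    using nd_exp[OF sp] by (auto simp: F2_def fun_eq_iff mult_ac)
  have i_exp: "integrable lborel (\<lambda>t. normal_density \<mu> \<sigma> t * exp t)"
    unfolding ndexp by (rule integrable_mult_right) (rule integrable_normal_density[OF sp])
  have i_F1: "integrable lborel (\<lambda>t. normal_density \<mu> \<sigma> t * F1 t)"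
    unfolding F1_def by (rule integrable_nd_if[OF sp])
  have i_F2: "integrable lborel (\<lambda>t. normal_density \<mu> \<sigma> t * F2 t)"
    unfolding ndF2 F1_def by (rule integrable_mult_right) (rule integrable_nd_if[OF sp])
  have "integrable M (\<lambda>\<xi>. exp (ln (X \<xi>)))"
    using logn_transfer(1)[OF LN _ i_exp] by simp
  then show "integrable M X"
    using integrable_cong_AE[of X M "\<lambda>\<xi>. exp (ln (X \<xi>))"] ae3 by simp
  have "integrable M (\<lambda>\<xi>. F1 (ln (X \<xi>)))"
    using logn_transfer(1)[OF LN F1m i_F1] .
  then show "integrable M (\<lambda>\<xi>. L (X \<xi>))"
    using integrable_cong_AE[of "\<lambda>\<xi>. L (X \<xi>)" M "\<lambda>\<xi>. F1 (ln (X \<xi>))"] ae1 by simp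
  have "integrable M (\<lambda>\<xi>. F2 (ln (X \<xi>)))"
    using logn_transfer(1)[OF LN F2m i_F2] .
  then show "integrable M (\<lambda>\<xi>. L (X \<xi>) * X \<xi>)"
    using integrable_cong_AE[of "\<lambda>\<xi>. L (X \<xi>) * X \<xi>" M "\<lambda>\<xi>. F2 (ln (X \<xi>))"] ae2 by simp
  have "(\<integral>\<xi>. L (X \<xi>) \<partial>M) = (\<integral>\<xi>. F1 (ln (X \<xi>)) \<partial>M)"
    by (rule integral_cong_AE) (use ae1 in auto)
  also have "\<dots> = (\<integral>t. normal_density \<mu> \<sigma> t * F1 t \<partial>lborel)"
    by (rule logn_transfer(2)[OF LN F1m i_F1])
  also have "\<dots> = (\<integral>u. std_normal_density u * F1 (\<mu> + \<sigma> * u) \<partial>lborel)"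
    by (rule nd_affine_int[OF sp])
  also have "(\<lambda>u. F1 (\<mu> + \<sigma> * u)) = (\<lambda>u. if c \<le> u then \<alpha> else \<beta>)"
    using sp by (auto simp: F1_def fun_eq_iff)
  finally show "(\<integral>\<xi>. L (X \<xi>) \<partial>M) = \<alpha> * (1 - Phi c) + \<beta> * Phi c"
    by (simp add: phi_if_int)
  have "(\<integral>\<xi>. L (X \<xi>) * X \<xi> \<partial>M) = (\<integral>\<xi>. F2 (ln (X \<xi>)) \<partial>M)"
    by (rule integral_cong_AE) (use ae2 in auto)
  also have "\<dots> = (\<integral>t. normal_density \<mu> \<sigma> t * F2 t \<partial>lborel)"
    by (rule logn_transfer(2)[OF LN F2m i_F2])
  also have "\<dots> = exp (\<mu> + \<sigma>\<^sup>2 / 2) * (\<integral>t. normal_density (\<mu> + \<sigma>\<^sup>2) \<sigma> t * F1 t \<partial>lborel)"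
    unfolding ndF2 by simp
  also have "(\<integral>t. normal_density (\<mu> + \<sigma>\<^sup>2) \<sigma> t * F1 t \<partial>lborel)
      = (\<integral>u. std_normal_density u * F1 (\<mu> + \<sigma>\<^sup>2 + \<sigma> * u) \<partial>lborel)"
    by (rule nd_affine_int[OF sp])
  also have "(\<lambda>u. F1 (\<mu> + \<sigma>\<^sup>2 + \<sigma> * u)) = (\<lambda>u. if c - \<sigma> \<le> u then \<alpha> else \<beta>)"
  proof -
    have "\<mu> + \<sigma> * c \<le> \<mu> + \<sigma>\<^sup>2 + \<sigma> * u \<longleftrightarrow> c - \<sigma> \<le> u" for u
    proof -
      have "\<mu> + \<sigma> * c \<le> \<mu> + \<sigma>\<^sup>2 + \<sigma> * u \<longleftrightarrow> \<sigma> * (c - \<sigma>) \<le> \<sigma> * u"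
        by (simp add: algebra_simps power2_eq_square)
      also have "\<dots> \<longleftrightarrow> c - \<sigma> \<le> u" using sp by simp
      finally show ?thesis .
    qed
    thus ?thesis by (auto simp: F1_def fun_eq_iff)
  qed
  finally show "(\<integral>\<xi>. L (X \<xi>) * X \<xi> \<partial>M) = exp (\<mu> + \<sigma>\<^sup>2 / 2) * (\<alpha> * (1 - Phi (c - \<sigma>)) + \<beta> * Phi (c - \<sigma>))"
    by (simp add: phi_if_int)
qed


lemma wait_cong:
  "(\<And>j. 1 \<le> j \<Longrightarrow> j < k \<Longrightarrow> b (tau j) = b' (tau j)) \<Longrightarrow> wait tau x b k = wait tau x b' k"
proof (induction k rule: less_induct)
  case (less k)
  consider "k = 0" | "k = Suc 0" | i where "k = Suc (Suc i)"
    by (metis not0_implies_Suc)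
  then show ?case
  proof cases
    case 3
    have "wait tau x b (Suc i) = wait tau x b' (Suc i)"
      using less.IH[of "Suc i"] less.prems 3 by auto
    moreover have "b (tau (Suc i)) = b' (tau (Suc i))" using less.prems 3 by auto
    ultimately show ?thesis using 3 by simp
  qed auto
qed

lemma wait_nonneg: "0 \<le> wait tau x b k"
  by (induction tau x b k rule: wait.induct) auto

lemma wait_meas_Pi:
  "(\<And>j. 1 \<le> j \<Longrightarrow> j < k \<Longrightarrow> tau j \<in> K) \<Longrightarrow>
     (\<lambda>g. wait tau x g k) \<in> borel_measurable (PiM K (\<lambda>_. borel :: real measure))"
proof (induction k rule: less_induct)
  case (less k)
  consider "k = 0" | "k = Suc 0" | i where "k = Suc (Suc i)"
    by (metis not0_implies_Suc)
  then show ?case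
  proof cases
    case 3
    have [measurable]: "(\<lambda>g. wait tau x g (Suc i)) \<in> borel_measurable (PiM K (\<lambda>_. borel))"
      using less.IH[of "Suc i"] less.prems 3 by auto
    have "tau (Suc i) \<in> K" using less.prems 3 by auto
    hence [measurable]: "(\<lambda>g. g (tau (Suc i))) \<in> borel_measurable (PiM K (\<lambda>_. borel))"
      by (rule measurable_component_singleton)
    show ?thesis unfolding 3 wait.simps by measurable
  qed auto
qed

lemma wait_idle_int:
  assumes P: "prob_space M" and "\<And>j. 1 \<le> j \<Longrightarrow> j < k \<Longrightarrow> integrable M (B (tau j))"
  shows "integrable M (\<lambda>\<xi>. wait tau x (\<lambda>j. B j \<xi>) k) \<and> integrable M (\<lambda>\<xi>. idle tau x (\<lambda>j. B j \<xi>) k)"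
proof -
  interpret prob_space M by (rule P)
  show ?thesis
  using assms(2)
proof (induction k rule: less_induct)
  case (less k)
  consider "k = 0" | "k = Suc 0" | i where "k = Suc (Suc i)"
    by (metis not0_implies_Suc)
  then show ?case
  proof cases
    case 3
    have W: "integrable M (\<lambda>\<xi>. wait tau x (\<lambda>j. B j \<xi>) (Suc i))"
      using less.IH[of "Suc i"] less.prems 3 by auto
    have Bi: "integrable M (B (tau (Suc i)))" using less.prems 3 by auto
    have D: "integrable M (\<lambda>\<xi>. wait tau x (\<lambda>j. B j \<xi>) (Suc i) + B (tau (Suc i)) \<xi> - x (tau (Suc i)))"
      by (intro Bochner_Integration.integrable_diff Bochner_Integration.integrable_add W Bi integrable_const)
    show ?thesis unfolding 3 wait.simps idle.simps
      using Bochner_Integration.integrable_max[OF integrable_zero D]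
        Bochner_Integration.integrable_max[OF integrable_zero integrable_minus[OF D]]
      by simp
  qed auto
qed
qed



lemma slot_bound:
  fixes M :: "'a measure" and B :: "nat \<Rightarrow> 'a \<Rightarrow> real"
  assumes P: "prob_space M" and w: "0 < w" "w < 1"
    and LN: "\<And>i. i \<in> {1..n} \<Longrightarrow> lognormal_rv M (B i) (m i) (s i)"
    and IND: "prob_space.indep_vars M (\<lambda>_. borel) B {1..n}"
    and T: "tau permutes {1..n}" and k: "1 \<le> k" "k < n"
  shows "w * (\<integral>\<xi>. idle tau x (\<lambda>j. B j \<xi>) (Suc k) \<partial>M) + (1 - w) * (\<integral>\<xi>. wait tau x (\<lambda>j. B j \<xi>) (Suc k) \<partial>M)
    \<ge> exp (m (tau k) + (s (tau k))\<^sup>2 / 2) * ((1 - w) - Phi (Q_Z (1 - w) - s (tau k)))"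
proof -
  interpret prob_space M by (rule P)
  define z where "z = Q_Z (1 - w)"
  define p where "p = tau k"
  have Tin: "\<And>j. j \<in> {1..n} \<Longrightarrow> tau j \<in> {1..n}" using permutes_in_image[OF T] by blast
  have pin: "p \<in> {1..n}" unfolding p_def using Tin k by auto
  define L where "L = (\<lambda>b. if exp (m p + s p * z) \<le> b then 1 - w else - w)"
  have key2: "integrable M (\<lambda>\<xi>. L (B p \<xi>))"
    using logn_key(2)[OF LN[OF pin], where c=z and \<alpha>="1 - w" and \<beta>="- w"] by (simp add: L_def)
  have key3: "integrable M (\<lambda>\<xi>. L (B p \<xi>) * B p \<xi>)"
    using logn_key(3)[OF LN[OF pin], where c=z and \<alpha>="1 - w" and \<beta>="- w"] by (simp add: L_def)
  have key4: "(\<integral>\<xi>. L (B p \<xi>) \<partial>M) = (1 - w) * (1 - Phi z) + (- w) * Phi z"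
    using logn_key(4)[OF LN[OF pin], where c=z and \<alpha>="1 - w" and \<beta>="- w"] by (simp add: L_def)
  have key5: "(\<integral>\<xi>. L (B p \<xi>) * B p \<xi> \<partial>M) = exp (m p + (s p)\<^sup>2 / 2) * ((1 - w) * (1 - Phi (z - s p)) + (- w) * Phi (z - s p))"
    using logn_key(5)[OF LN[OF pin], where c=z and \<alpha>="1 - w" and \<beta>="- w"] by (simp add: L_def)
  have Lm[measurable]: "L \<in> borel_measurable borel" unfolding L_def by measurable
  have Bint: "\<And>j. 1 \<le> j \<Longrightarrow> j < k \<Longrightarrow> integrable M (B (tau j))"
    using Tin k logn_key(1)[OF LN] by auto
  define Wk where "Wk = (\<lambda>\<xi>. wait tau x (\<lambda>j. B j \<xi>) k)"
  have "integrable M Wk \<and> integrable M (\<lambda>\<xi>. idle tau x (\<lambda>j. B j \<xi>) k)"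
    unfolding Wk_def by (rule wait_idle_int[OF P]) (rule Bint)
  hence Wint: "integrable M Wk" by blast
  have Bint2: "\<And>j. 1 \<le> j \<Longrightarrow> j < Suc k \<Longrightarrow> integrable M (B (tau j))"
    using Tin k logn_key(1)[OF LN] by auto
  have "integrable M (\<lambda>\<xi>. wait tau x (\<lambda>j. B j \<xi>) (Suc k)) \<and> integrable M (\<lambda>\<xi>. idle tau x (\<lambda>j. B j \<xi>) (Suc k))"
    by (rule wait_idle_int[OF P]) (rule Bint2)
  hence WI: "integrable M (\<lambda>\<xi>. wait tau x (\<lambda>j. B j \<xi>) (Suc k))"
    "integrable M (\<lambda>\<xi>. idle tau x (\<lambda>j. B j \<xi>) (Suc k))" by blast+
  define D where "D = (\<lambda>\<xi>. Wk \<xi> + B p \<xi> - x p)"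
  obtain i where ki: "k = Suc i" using k by (metis Suc_le_D One_nat_def)
  have Weq: "wait tau x (\<lambda>j. B j \<xi>) (Suc k) = max 0 (D \<xi>)" for \<xi>
    unfolding ki D_def Wk_def p_def by simp
  have Ieq: "idle tau x (\<lambda>j. B j \<xi>) (Suc k) = max 0 (- D \<xi>)" for \<xi>
    unfolding ki D_def Wk_def p_def by simp
  define K where "K = tau ` {1..<k}"
  have disj: "{p} \<inter> K = {}"
  proof -
    have "inj_on tau {1..n}" using T permutes_inj_on by blast
    moreover have "k \<notin> {1..<k}" by simp
    ultimately have "tau k \<noteq> tau j" if "j \<in> {1..<k}" for j
      using inj_onD[of tau "{1..n}" k j] that k by auto
    then show ?thesis unfolding K_def p_def by blast
  qed
  have Ksub: "K \<subseteq> {1..n}" unfolding K_def using Tin k by auto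
  have iv: "indep_var (PiM {p} (\<lambda>_. borel)) (\<lambda>\<omega>. restrict (\<lambda>i. B i \<omega>) {p})
                      (PiM K (\<lambda>_. borel)) (\<lambda>\<omega>. restrict (\<lambda>i. B i \<omega>) K)"
    by (rule indep_var_restrict[OF IND disj]) (use pin Ksub in auto)
  have Y1: "(\<lambda>g. L (g p)) \<in> borel_measurable (PiM {p} (\<lambda>_. borel :: real measure))"
  proof -
    have [measurable]: "(\<lambda>g. g p) \<in> borel_measurable (PiM {p} (\<lambda>_. borel :: real measure))"
      by (rule measurable_component_singleton) simp
    show ?thesis by measurable
  qed
  have Y2: "(\<lambda>g. wait tau x g k - x p) \<in> borel_measurable (PiM K (\<lambda>_. borel :: real measure))"
  proof -
    have [measurable]: "(\<lambda>g. wait tau x g k) \<in> borel_measurable (PiM K (\<lambda>_. borel :: real measure))"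
      by (rule wait_meas_Pi) (auto simp: K_def)
    show ?thesis by measurable
  qed
  have iv2: "indep_var borel ((\<lambda>g. L (g p)) \<circ> (\<lambda>\<omega>. restrict (\<lambda>i. B i \<omega>) {p}))
                       borel ((\<lambda>g. wait tau x g k - x p) \<circ> (\<lambda>\<omega>. restrict (\<lambda>i. B i \<omega>) K))"
    by (rule indep_var_compose[OF iv Y1 Y2])
  have c1: "((\<lambda>g. L (g p)) \<circ> (\<lambda>\<omega>. restrict (\<lambda>i. B i \<omega>) {p})) = (\<lambda>\<xi>. L (B p \<xi>))"
    by (simp add: fun_eq_iff)
  have c2: "((\<lambda>g. wait tau x g k - x p) \<circ> (\<lambda>\<omega>. restrict (\<lambda>i. B i \<omega>) K)) = (\<lambda>\<xi>. Wk \<xi> - x p)"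
    unfolding Wk_def comp_def
    by (rule ext, rule arg_cong[where f="\<lambda>t. t - x p"], rule wait_cong) (auto simp: K_def)
  have iv3: "indep_var borel (\<lambda>\<xi>. L (B p \<xi>)) borel (\<lambda>\<xi>. Wk \<xi> - x p)"
    using iv2 unfolding c1 c2 .
  have Wxint: "integrable M (\<lambda>\<xi>. Wk \<xi> - x p)"
    by (intro Bochner_Integration.integrable_diff Wint integrable_const)
  have EL: "(\<integral>\<xi>. L (B p \<xi>) \<partial>M) = 0"
  proof -
    have "Phi z = 1 - w" unfolding z_def using w by (intro Phi_Q_Z) auto
    thus ?thesis using key4 by (simp add: algebra_simps)
  qed
  have prod0: "(\<integral>\<xi>. L (B p \<xi>) * (Wk \<xi> - x p) \<partial>M) = 0"
    using indep_var_lebesgue_integral[OF iv3 key2 Wxint] EL by simp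
  have prodint: "integrable M (\<lambda>\<xi>. L (B p \<xi>) * (Wk \<xi> - x p))"
    using indep_var_integrable[OF iv3 key2 Wxint] .
  have pw: "L (B p \<xi>) * D \<xi> \<le> w * idle tau x (\<lambda>j. B j \<xi>) (Suc k) + (1 - w) * wait tau x (\<lambda>j. B j \<xi>) (Suc k)" for \<xi>
  proof (cases "exp (m p + s p * z) \<le> B p \<xi>")
    case True
    have "(1 - w) * D \<xi> \<le> (1 - w) * max 0 (D \<xi>)" using w by (intro mult_left_mono) auto
    moreover have "0 \<le> w * max 0 (- D \<xi>)" using w by simp
    ultimately show ?thesis unfolding Weq Ieq L_def using True by simp
  next
    case False
    have "w * (- D \<xi>) \<le> w * max 0 (- D \<xi>)" using w by (intro mult_left_mono) auto
    moreover have "0 \<le> (1 - w) * max 0 (D \<xi>)" using w by simp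
    ultimately show ?thesis unfolding Weq Ieq L_def using False by simp
  qed
  have LD: "(\<lambda>\<xi>. L (B p \<xi>) * D \<xi>) = (\<lambda>\<xi>. L (B p \<xi>) * B p \<xi> + L (B p \<xi>) * (Wk \<xi> - x p))"
    by (auto simp: D_def fun_eq_iff algebra_simps)
  have "exp (m p + (s p)\<^sup>2 / 2) * ((1 - w) - Phi (z - s p)) = (\<integral>\<xi>. L (B p \<xi>) * B p \<xi> \<partial>M)"
    using key5 by (simp add: algebra_simps)
  also have "\<dots> = (\<integral>\<xi>. L (B p \<xi>) * D \<xi> \<partial>M)"
    unfolding LD using prod0 by (subst Bochner_Integration.integral_add[OF key3 prodint]) simp
  also have "\<dots> \<le> (\<integral>\<xi>. w * idle tau x (\<lambda>j. B j \<xi>) (Suc k) + (1 - w) * wait tau x (\<lambda>j. B j \<xi>) (Suc k) \<partial>M)"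
    by (rule integral_mono) (use pw WI key3 prodint in \<open>auto simp: LD\<close>)
  also have "\<dots> = w * (\<integral>\<xi>. idle tau x (\<lambda>j. B j \<xi>) (Suc k) \<partial>M) + (1 - w) * (\<integral>\<xi>. wait tau x (\<lambda>j. B j \<xi>) (Suc k) \<partial>M)"
    using WI by simp
  finally show ?thesis unfolding p_def z_def by simp
qed



theorem propositionC2:
  fixes M :: "'a measure" and B :: "nat \<Rightarrow> 'a \<Rightarrow> real"
    and m s :: "nat \<Rightarrow> real" and n :: nat and w :: real
    and tau :: "nat \<Rightarrow> nat" and x :: "nat \<Rightarrow> real"
  assumes "prob_space M"
    and "n \<ge> 2"
    and "0 < w" "w < 1"
    and "\<And>i. i \<in> {1..n} \<Longrightarrow> lognormal_rv M (B i) (m i) (s i)"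
    and "prob_space.indep_vars M (\<lambda>_. borel) B {1..n}"
    and "\<And>i j. 1 \<le> i \<Longrightarrow> i \<le> j \<Longrightarrow> j \<le> n \<Longrightarrow> m i \<le> m j"
    and "\<And>i j. 1 \<le> i \<Longrightarrow> i \<le> j \<Longrightarrow> j \<le> n \<Longrightarrow> (s i)\<^sup>2 \<le> (s j)\<^sup>2"
    and "tau permutes {1..n}"
    and "\<And>j. j \<in> {1..n} \<Longrightarrow> 0 \<le> x j"
  shows "cost M B n tau x w \<ge>
    ((1 - w) * measure std_normal {Q_Z (1 - w) - s 1..}
      - w * measure std_normal {..Q_Z (1 - w) - s 1})
    * (\<Sum>i=1..n-1. exp (m i + (s i)\<^sup>2 / 2))"
proof -
  note P = assms(1) and LN = assms(5) and T = assms(9)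
  define z where "z = Q_Z (1 - w)"
  define a where "a = (\<lambda>i. exp (m i + (s i)\<^sup>2 / 2))"
  define g where "g = (\<lambda>i. (1 - w) - Phi (z - s i))"
  define h where "h = (\<lambda>i. w * (\<integral>\<xi>. idle tau x (\<lambda>j. B j \<xi>) i \<partial>M) + (1 - w) * (\<integral>\<xi>. wait tau x (\<lambda>j. B j \<xi>) i \<partial>M))"
  have Tin: "\<And>j. j \<in> {1..n} \<Longrightarrow> tau j \<in> {1..n}" using permutes_in_image[OF T] by blast
  have spos: "\<And>i. i \<in> {1..n} \<Longrightarrow> 0 < s i" using LN unfolding lognormal_rv_def by blast
  define n' where "n' = n - 1"
  have n': "n = Suc n'" "1 \<le> n'" using assms(2) unfolding n'_def by auto
  have "cost M B n tau x w = (\<Sum>i=1..n. h i)"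
    unfolding cost_def h_def by (simp add: sum_distrib_left sum.distrib)
  also have "\<dots> = h 1 + (\<Sum>i=Suc 1..Suc n'. h i)"
    using n' by (subst sum.atLeast_Suc_atMost) auto
  also have "h 1 = 0" by (simp add: h_def)
  also have "(\<Sum>i=Suc 1..Suc n'. h i) = (\<Sum>k=1..n'. h (Suc k))"
    by (rule sum.shift_bounds_cl_Suc_ivl)
  finally have c1: "cost M B n tau x w = (\<Sum>k=1..n'. h (Suc k))" by simp
  have S1: "(\<Sum>k=1..n'. a (tau k) * g (tau k)) \<le> (\<Sum>k=1..n'. h (Suc k))"
  proof (rule sum_mono)
    fix k assume "k \<in> {1..n'}"
    then show "a (tau k) * g (tau k) \<le> h (Suc k)"
      using slot_bound[OF P assms(3,4) LN assms(6) T, of k x] n'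
      unfolding a_def g_def h_def z_def by auto
  qed
  have S2: "(\<Sum>k=1..n'. a (tau k) * g 1) \<le> (\<Sum>k=1..n'. a (tau k) * g (tau k))"
  proof (rule sum_mono)
    fix k assume k: "k \<in> {1..n'}"
    hence tk: "tau k \<in> {1..n}" using Tin n' by auto
    have "(s 1)\<^sup>2 \<le> (s (tau k))\<^sup>2" using assms(8)[of 1 "tau k"] tk by auto
    hence "s 1 \<le> s (tau k)" using spos[OF tk] by (rule power2_le_imp_le[OF _ less_imp_le])
    hence "g 1 \<le> g (tau k)" unfolding g_def using Phi_mono[of "z - s (tau k)" "z - s 1"] by simp
    then show "a (tau k) * g 1 \<le> a (tau k) * g (tau k)"
      by (intro mult_left_mono) (auto simp: a_def)
  qed
  have g1: "0 \<le> g 1"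
  proof -
    have "Phi z = 1 - w" unfolding z_def using assms(3,4) by (intro Phi_Q_Z) auto
    moreover have "0 < s 1" using spos n' by auto
    ultimately show ?thesis unfolding g_def using Phi_mono[of "z - s 1" z] by simp
  qed
  have S3: "(\<Sum>i=1..n'. a i) \<le> (\<Sum>k=1..n'. a (tau k))"
  proof -
    have "(\<Sum>k=1..n. a (tau k)) = (\<Sum>i=1..n. a i)"
      by (rule sum.reindex_bij_betw[OF permutes_imp_bij[OF T]])
    hence "(\<Sum>k=1..n'. a (tau k)) + a (tau n) = (\<Sum>i=1..n'. a i) + a n"
      using n' by simp
    moreover have "a (tau n) \<le> a n"
    proof -
      have tn: "tau n \<in> {1..n}" using Tin n' by auto
      have "m (tau n) \<le> m n" "(s (tau n))\<^sup>2 \<le> (s n)\<^sup>2"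
        using assms(7)[of "tau n" n] assms(8)[of "tau n" n] tn by auto
      thus ?thesis unfolding a_def by simp
    qed
    ultimately show ?thesis by simp
  qed
  have "g 1 * (\<Sum>i=1..n'. a i) \<le> g 1 * (\<Sum>k=1..n'. a (tau k))"
    by (rule mult_left_mono[OF S3 g1])
  also have "\<dots> = (\<Sum>k=1..n'. a (tau k) * g 1)"
    by (simp add: sum_distrib_left mult.commute)
  also note S2
  also note S1
  also note c1[symmetric]
  finally have main: "g 1 * (\<Sum>i=1..n'. a i) \<le> cost M B n tau x w" .
  have "((1 - w) * measure std_normal {Q_Z (1 - w) - s 1..}
      - w * measure std_normal {..Q_Z (1 - w) - s 1}) = g 1"
    unfolding g_def z_def std_normal_atLeast Phi_def[symmetric] by (simp add: algebra_simps)
  with main show ?thesis unfolding a_def using n' by simp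
qed

end
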